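(* Let $$\Pi_0(\phi)=2\sum_{n=1}^{\infty}\frac{(-1)^{n-1}}{n^3\binom{2n}{n}}\,\phi^{n-1}=1-\frac{\phi}{24}+\frac{\phi^2}{270}+\cdots,$$ a power series converging on the disc $|\phi|<4$. Then $\Pi_0$ satisfies the ordinary differential equation $$\Big((4+\phi)\vartheta^4+(10+4\phi)\vartheta^3+(8+6\phi)\vartheta^2+(2+4\phi)\vartheta+\phi\Big)\Pi_0(\phi)=0,$$ where $\vartheta=\phi\,\frac{d}{d\phi}$.
   Context: $\binom{2n}{n}$ denotes the central binomial coefficient. The operator $\vartheta=\phi\frac{d}{d\phi}$ is the Euler derivative, and $\vartheta^k$ denotes its $k$-fold iterate. *)

theory Defs
  imports "HOL-Analysis.Analysis"
begin

definition Pi0 :: "complex \<Rightarrow> complex" where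
  "Pi0 \<phi> = 2 * (\<Sum>m. (-1) ^ m / (of_nat (Suc m) ^ 3 * of_nat ((2 * Suc m) choose (Suc m))) * \<phi> ^ m)"

definition theta :: "(complex \<Rightarrow> complex) \<Rightarrow> complex \<Rightarrow> complex" where
  "theta f = (\<lambda>\<phi>. \<phi> * deriv f \<phi>)"

end

theory Submission
  imports Defs
begin

definition bb :: "nat \<Rightarrow> complex" where
  "bb m = (-1) ^ m / (of_nat (Suc m) ^ 3 * of_nat ((2 * Suc m) choose (Suc m)))"

definition cc :: "nat \<Rightarrow> nat \<Rightarrow> complex" where
  "cc k n = of_nat n ^ k * bb n"

definition SS :: "nat \<Rightarrow> complex \<Rightarrow> complex" where
  "SS k z = (\<Sum>n. cc k n * z ^ n)"

lemma aux: fixes G p F x :: "'a::field" assumes "G \<noteq> 0" "p \<noteq> 0"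
  shows "(2 * p) * x * F / (p * G * (p * G)) * p = 2 * x * (F / (G * G))"
  using assms by (simp add: field_simps)

lemma binrec: "(of_nat ((2 * Suc (Suc n)) choose Suc (Suc n)) :: 'a::field_char_0) * (of_nat n + 2)
   = 2 * (2 * of_nat n + 3) * of_nat ((2 * Suc n) choose Suc n)"
proof -
  have e1: "2 * Suc (Suc n) = Suc (Suc (2 * Suc n))" by simp
  have e2: "2 * Suc (Suc n) - Suc (Suc n) = Suc (Suc n)" by simp
  have e3: "2 * Suc n - Suc n = Suc n" by simp
  have h1: "(of_nat ((2 * Suc (Suc n)) choose Suc (Suc n)) :: 'a) = fact (2 * Suc (Suc n)) / (fact (Suc (Suc n)) * fact (Suc (Suc n)))"
    by (subst binomial_fact) (simp_all only: e2, simp)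
  have h2: "(of_nat ((2 * Suc n) choose Suc n) :: 'a) = fact (2 * Suc n) / (fact (Suc n) * fact (Suc n))"
    by (subst binomial_fact) (simp_all only: e3, simp)
  have h3: "(fact (2 * Suc (Suc n)) :: 'a) = (2 * (of_nat n + 2)) * (2 * of_nat n + 3) * fact (2 * Suc n)"
    by (simp only: e1 fact_Suc) (simp add: algebra_simps)
  have h4: "(fact (Suc (Suc n)) :: 'a) = (of_nat n + 2) * fact (Suc n)"
    by (simp only: fact_Suc[of "Suc n"]) (simp add: algebra_simps)
  show ?thesis
    unfolding h1 h2 h3 h4
  proof -
    have g: "(fact (Suc n) :: 'a) \<noteq> 0" by (rule fact_nonzero)
    have p: "(of_nat n + 2 :: 'a) \<noteq> 0" by (metis of_nat_add of_nat_numeral of_nat_eq_0_iff add_is_0 zero_neq_numeral)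
    show "(2 * (of_nat n + 2) :: 'a) * (2 * of_nat n + 3) * fact (2 * Suc n) / ((of_nat n + 2) * fact (Suc n) * ((of_nat n + 2) * fact (Suc n))) * (of_nat n + 2) =
    2 * (2 * of_nat n + 3) * (fact (2 * Suc n) / (fact (Suc n) * fact (Suc n)))"
      using aux[OF g p] by simp
  qed
qed

lemma choose_nz: "(of_nat ((2 * Suc n) choose Suc n) :: complex) \<noteq> 0"
proof -
  have "(2 * Suc n) choose Suc n > 0" by (rule zero_less_binomial) simp
  then show ?thesis by (simp only: of_nat_eq_0_iff)
qed

lemma aux3: fixes s y C :: complex assumes "C \<noteq> 0" "y \<noteq> 0"
  shows "s * (2 * y) / (2 * y * C) = s / C"
  using assms by simp

lemma aux2: fixes s a x C :: complex assumes "a \<noteq> 0" "C \<noteq> 0"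
  shows "s / (a^3 * C) * (2 * a^2 * x) = s * (2 * x) / (C * a)"
  using assms by (simp add: field_simps power2_eq_square power3_eq_cube)

lemma bb_rec: "bb (Suc n) * (2 * (of_nat n + 2)^2 * (2 * of_nat n + 3)) = - bb n * (of_nat n + 1)^3"
proof -
  define C1 :: complex where "C1 = of_nat ((2 * Suc n) choose Suc n)"
  define C2 :: complex where "C2 = of_nat ((2 * Suc (Suc n)) choose Suc (Suc n))"
  have c1: "C1 \<noteq> 0" unfolding C1_def by (rule choose_nz)
  have c2: "C2 \<noteq> 0" unfolding C2_def by (rule choose_nz)
  have r: "C2 * (of_nat n + 2) = 2 * (2 * of_nat n + 3) * C1" unfolding C1_def C2_def by (rule binrec)
  have p: "(of_nat n + 2 :: complex) \<noteq> 0"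
    by (metis of_nat_add of_nat_numeral of_nat_eq_0_iff add_is_0 zero_neq_numeral)
  have p1: "(of_nat n + 1 :: complex) \<noteq> 0"
    by (metis of_nat_Suc of_nat_eq_0_iff Suc_neq_Zero add.commute)
  have bs: "bb (Suc n) = (-1)^(Suc n) / ((of_nat n + 2)^3 * C2)"
    unfolding bb_def C2_def by (simp add: add.commute)
  have bn: "bb n = (-1)^n / ((of_nat n + 1)^3 * C1)"
    unfolding bb_def C1_def by (simp add: add.commute)
  have x: "(2 * of_nat n + 3 :: complex) \<noteq> 0"
    by (metis of_nat_mult of_nat_add of_nat_numeral of_nat_eq_0_iff add_is_0 zero_neq_numeral)
  have "bb (Suc n) * (2 * (of_nat n + 2)^2 * (2 * of_nat n + 3)) = (-1)^(Suc n) * (2 * (2 * of_nat n + 3)) / (C2 * (of_nat n + 2))"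
    unfolding bs by (rule aux2[OF p c2])
  also have "\<dots> = (-1)^(Suc n) / C1"
    unfolding r using c1 x by (rule aux3)
  also have "\<dots> = - bb n * (of_nat n + 1)^3"
    unfolding bn using c1 p1 by (simp add: field_simps)
  finally show ?thesis .
qed

lemma bb_norm: "norm (bb (Suc n)) \<le> norm (bb n) / 4"
proof -
  define D :: real where "D = 2 * (real n + 2)^2 * (2 * real n + 3)"
  have D1: "(2 * (of_nat n + 2)^2 * (2 * of_nat n + 3) :: complex) = of_real D"
    unfolding D_def by simp
  have D2: "((of_nat n + 1)^3 :: complex) = of_real ((real n + 1)^3)" by simp
  have e: "norm (bb (Suc n)) * D = norm (bb n) * (real n + 1)^3"
  proof -
    have "norm (bb (Suc n) * of_real D) = norm (- bb n * of_real ((real n + 1)^3))"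
      using bb_rec[of n] unfolding D1 D2 by simp
    moreover have "D \<ge> 0" unfolding D_def by simp
    moreover have "(real n + 1)^3 \<ge> 0" by simp
    ultimately show ?thesis by (simp only: norm_mult norm_minus_cancel norm_of_real abs_of_nonneg)
  qed
  have Dp: "D > 0" unfolding D_def by simp
  have le: "4 * (real n + 1)^3 \<le> D" unfolding D_def
    by (simp add: power2_eq_square power3_eq_cube algebra_simps)
  have "norm (bb (Suc n)) * D \<le> norm (bb n) / 4 * D"
    unfolding e using le mult_left_mono[OF le norm_ge_zero[of "bb n"]] by simp
  then show ?thesis using Dp by simp
qed

lemma summ0: assumes "norm (x::complex) < 4" shows "summable (\<lambda>n. bb n * x ^ n)"
proof (rule summable_ratio_test[where c = "norm x / 4" and N = 0])
  show "norm x / 4 < 1" using assms by simp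
  fix n :: nat
  have "norm (bb (Suc n) * x ^ Suc n) = norm (bb (Suc n)) * (norm x * norm x ^ n)"
    by (simp add: norm_mult norm_power)
  also have "\<dots> \<le> norm (bb n) / 4 * (norm x * norm x ^ n)"
    by (rule mult_right_mono[OF bb_norm]) simp
  also have "\<dots> = norm x / 4 * norm (bb n * x ^ n)"
    by (simp add: norm_mult norm_power)
  finally show "norm (bb (Suc n) * x ^ Suc n) \<le> norm x / 4 * norm (bb n * x ^ n)" .
qed

lemma summ: "norm (x::complex) < 4 \<Longrightarrow> summable (\<lambda>n. cc k n * x ^ n)"
proof (induction k arbitrary: x)
  case 0
  then show ?case using summ0 by (simp add: cc_def)
next
  case (Suc k)
  have "summable (\<lambda>n. diffs (cc k) n * x ^ n)"
    by (rule termdiff_converges[OF Suc.prems]) (rule Suc.IH)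
  then have "summable (\<lambda>n. x * (diffs (cc k) n * x ^ n))" by (rule summable_mult)
  moreover have "(\<lambda>n. x * (diffs (cc k) n * x ^ n)) = (\<lambda>n. cc (Suc k) (Suc n) * x ^ Suc n)"
    by (auto simp: diffs_def cc_def algebra_simps)
  ultimately have "summable (\<lambda>n. cc (Suc k) (Suc n) * x ^ Suc n)" by simp
  then show ?case by (subst summable_Suc_iff[symmetric])
qed

lemma SS_deriv: assumes "norm z < 4"
  shows "(SS k has_field_derivative (\<Sum>n. diffs (cc k) n * z ^ n)) (at z)"
proof -
  have "((\<lambda>z. \<Sum>n. cc k n * z^n) has_field_derivative (\<Sum>n. diffs (cc k) n * z^n)) (at z)"
    by (rule termdiffs_strong'[where K = 4]) (auto intro: summ assms)
  then show ?thesis unfolding SS_def[abs_def] .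
qed

lemma SS_step: assumes "norm z < 4"
  shows "z * (\<Sum>n. diffs (cc k) n * z ^ n) = SS (Suc k) z"
proof -
  have sm: "summable (\<lambda>n. diffs (cc k) n * z ^ n)"
    by (rule termdiff_converges[OF assms]) (rule summ)
  have "z * (\<Sum>n. diffs (cc k) n * z ^ n) = (\<Sum>n. z * (diffs (cc k) n * z ^ n))"
    using suminf_mult[OF sm] by simp
  also have "(\<lambda>n. z * (diffs (cc k) n * z ^ n)) = (\<lambda>n. cc (Suc k) (Suc n) * z ^ Suc n)"
    by (auto simp: diffs_def cc_def algebra_simps)
  also have "(\<Sum>n. cc (Suc k) (Suc n) * z ^ Suc n) = SS (Suc k) z - cc (Suc k) 0 * z ^ 0"
    unfolding SS_def by (rule suminf_split_head[where f = "\<lambda>n. cc (Suc k) n * z ^ n"]) (rule summ[OF assms])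
  also have "\<dots> = SS (Suc k) z" by (simp add: cc_def)
  finally show ?thesis .
qed

lemma iter: "norm z < 4 \<Longrightarrow> (theta ^^ k) Pi0 z = 2 * SS k z"
proof (induction k arbitrary: z)
  case 0
  then show ?case by (simp add: Pi0_def SS_def cc_def bb_def)
next
  case (Suc k)
  have d: "((\<lambda>w. 2 * SS k w) has_field_derivative 2 * (\<Sum>n. diffs (cc k) n * z ^ n)) (at z)"
    by (rule DERIV_cmult[OF SS_deriv[OF Suc.prems]])
  have d2: "((theta ^^ k) Pi0 has_field_derivative 2 * (\<Sum>n. diffs (cc k) n * z ^ n)) (at z)"
    by (rule has_field_derivative_transform_within_open[OF d, where S = "ball 0 4"])
       (use Suc.prems Suc.IH in auto)
  have "(theta ^^ Suc k) Pi0 z = z * deriv ((theta ^^ k) Pi0) z"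
    by (simp add: theta_def)
  also have "\<dots> = z * (2 * (\<Sum>n. diffs (cc k) n * z ^ n))"
    using DERIV_imp_deriv[OF d2] by simp
  also have "\<dots> = 2 * SS (Suc k) z"
    using SS_step[OF Suc.prems] by (simp add: algebra_simps)
  finally show ?case .
qed

definition ee :: "nat \<Rightarrow> complex" where
  "ee n = 4 * cc 4 n + 10 * cc 3 n + 8 * cc 2 n + 2 * cc 1 n"

lemma ee_Suc: "ee (Suc n) = - ((of_nat n + 1)^4 * bb n)"
proof -
  have "ee (Suc n) = (of_nat n + 1) * (bb (Suc n) * (2 * (of_nat n + 2)^2 * (2 * of_nat n + 3)))"
    unfolding ee_def cc_def by (simp add: algebra_simps power2_eq_square power3_eq_cube power4_eq_xxxx)
  also have "\<dots> = - ((of_nat n + 1)^4 * bb n)"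
    unfolding bb_rec by (simp add: algebra_simps power3_eq_cube power4_eq_xxxx)
  finally show ?thesis .
qed

lemma ee_0: "ee 0 = 0" by (simp add: ee_def cc_def)

lemma term_eq: fixes z :: complex shows "(4 + z) * (cc 4 n * z ^ n) + (10 + 4 * z) * (cc 3 n * z ^ n) + (8 + 6 * z) * (cc 2 n * z ^ n)
   + (2 + 4 * z) * (cc 1 n * z ^ n) + z * (cc 0 n * z ^ n) = ee n * z ^ n - ee (Suc n) * z ^ Suc n"
proof -
  have A: "\<And>N B w. (4 + z) * (N^4 * B * w) + (10 + 4 * z) * (N^3*B*w) + (8 + 6 * z) * (N^2*B*w)
   + (2 + 4 * z) * (N^1*B*w) + z * (N^0*B*w) = (4*(N^4*B) + 10*(N^3*B) + 8*(N^2*B)+2*(N^1*B))*w - (- ((N+1)^4*B))*(z*(w::complex))"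
    by algebra
  show ?thesis
    apply (subst ee_Suc)
    apply (unfold ee_def cc_def power_Suc[of z n])
    using A by (simp only: mult.assoc)
qed

theorem mainTheorem1:
  fixes \<phi> :: complex
  assumes "norm \<phi> < 4"
  shows "(4 + \<phi>) * (theta ^^ 4) Pi0 \<phi> + (10 + 4 * \<phi>) * (theta ^^ 3) Pi0 \<phi>
       + (8 + 6 * \<phi>) * (theta ^^ 2) Pi0 \<phi> + (2 + 4 * \<phi>) * theta Pi0 \<phi> + \<phi> * Pi0 \<phi> = 0"
proof -
  let ?z = \<phi>
  have s: "\<And>k. (\<lambda>n. cc k n * ?z ^ n) sums SS k ?z"
    using summ[OF assms] unfolding SS_def by (simp add: summable_sums)
  have S: "(\<lambda>n. (4 + ?z) * (cc 4 n * ?z ^ n) + (10 + 4 * ?z) * (cc 3 n * ?z ^ n) + (8 + 6 * ?z) * (cc 2 n * ?z ^ n)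
   + (2 + 4 * ?z) * (cc 1 n * ?z ^ n) + ?z * (cc 0 n * ?z ^ n)) sums
     ((4 + ?z) * SS 4 ?z + (10 + 4 * ?z) * SS 3 ?z + (8 + 6 * ?z) * SS 2 ?z + (2 + 4 * ?z) * SS 1 ?z + ?z * SS 0 ?z)"
    by (intro sums_add sums_mult s)
  have gs: "summable (\<lambda>n. ee n * ?z ^ n)"
  proof -
    have "(\<lambda>n. 4 * (cc 4 n * ?z ^ n) + 10 * (cc 3 n * ?z ^ n) + 8 * (cc 2 n * ?z ^ n) + 2 * (cc 1 n * ?z ^ n))
       sums (4 * SS 4 ?z + 10 * SS 3 ?z + 8 * SS 2 ?z + 2 * SS 1 ?z)"
      by (intro sums_add sums_mult s)
    then show ?thesis unfolding ee_def by (simp add: sums_summable algebra_simps)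
  qed
  have T: "(\<lambda>n. ee n * ?z ^ n - ee (Suc n) * ?z ^ Suc n) sums (ee 0 * ?z ^ 0 - 0)"
    by (rule telescope_sums'[where f = "\<lambda>n. ee n * ?z ^ n"]) (rule summable_LIMSEQ_zero[OF gs])
  have comb: "((4 + ?z) * SS 4 ?z + (10 + 4 * ?z) * SS 3 ?z + (8 + 6 * ?z) * SS 2 ?z + (2 + 4 * ?z) * SS 1 ?z + ?z * SS 0 ?z) = 0"
    using sums_unique2[OF S] T ee_0 unfolding term_eq by simp
  have i1: "theta Pi0 ?z = 2 * SS 1 ?z" using iter[OF assms, of 1] by simp
  have i0: "Pi0 ?z = 2 * SS 0 ?z" using iter[OF assms, of 0] by simp
  show ?thesis
    unfolding iter[OF assms, of 4] iter[OF assms, of 3] iter[OF assms, of 2] i1 i0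
    using comb by algebra
qed

end
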